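(* Let $p,q$ be primes congruent to $1$ modulo $4$, let $r$ be a positive integer, and let $m=4+8c$ for a nonnegative integer $c$. If $2mp^r-m^2q^2>0$, then $2mp^r-m^2q^2$ is good.
   Context: A positive integer is called good if it is not of the form $4^\alpha(8\beta+7)$ for integers $\alpha,\beta\ge 0$. *)

theory Defs
  imports "HOL-Computational_Algebra.Primes"
begin

definition good :: "int \<Rightarrow> bool" where
  "good n \<longleftrightarrow> n > 0 \<and> \<not> (\<exists>a b :: nat. n = 4 ^ a * (8 * int b + 7))"

end

theory Submission
  imports Defs
begin

lemma key:
  fixes N k :: int
  assumes "N = 8 * k" "odd k"
  shows "\<not> (\<exists>a b :: nat. N = 4 ^ a * (8 * int b + 7))"
proof
  assume "\<exists>a b :: nat. N = 4 ^ a * (8 * int b + 7)"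
  then obtain a b :: nat where h: "N = 4 ^ a * (8 * int b + 7)" by blast
  show False
  proof (cases a)
    case 0
    with h have "N = 8 * int b + 7" by simp
    with assms show ?thesis by presburger
  next
    case (Suc a')
    show ?thesis
    proof (cases a')
      case 0
      with Suc h have "N = 4 * (8 * int b + 7)" by simp
      with assms show ?thesis by presburger
    next
      case (Suc a'')
      have "(16::int) dvd 4 ^ a"
        using \<open>a = Suc a'\<close> Suc by (simp add: power_Suc)
      then have "16 dvd N" using h by simp
      with assms show ?thesis by presburger
    qed
  qed
qed

theorem mainTheorem5:
  fixes p q r c :: nat and m :: int
  assumes "prime p" and "prime q"
    and "p mod 4 = 1" and "q mod 4 = 1"
    and "r > 0"
    and "m = 4 + 8 * int c"
    and "2 * m * int p ^ r - m ^ 2 * int q ^ 2 > 0"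
  shows "good (2 * m * int p ^ r - m ^ 2 * int q ^ 2)"
proof -
  define u :: int where "u = 1 + 2 * int c"
  define w :: int where "w = int p ^ r - 2 * u * int q ^ 2"
  have m: "m = 4 * u" using assms(6) u_def by simp
  have N: "2 * m * int p ^ r - m ^ 2 * int q ^ 2 = 8 * (u * w)"
    unfolding m w_def by (simp add: algebra_simps power2_eq_square)
  have "odd (int p)" using assms(3) by presburger
  then have "odd (int p ^ r)" by simp
  then have "odd w" unfolding w_def by simp
  moreover have "odd u" unfolding u_def by simp
  ultimately have "odd (u * w)" by simp
  then show ?thesis unfolding good_def using assms(7) N key by metis
qed

end
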